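(* In the setting of the context, let $f(x)=\sum_{i=1}^mf_i(x)$. If $\frac12(\underline C+\underline C^\top)$ is positive semidefinite, then $f$ is convex on $\mathbb{R}^m$.
   Context: There are $m$ players with decisions $x_i\in\mathbb{R}$, $x=(x_1,\dots,x_m)\in\mathbb{R}^m$. Data: $a_i\ge0$, $b_i\in\mathbb{R}$, $c_{ij}\in\mathbb{R}$ ($i\ne j$), $c_i^{\mathrm{up}}>0$, $X_i=[0,c_i^{\mathrm{up}}]$, $\eta>0$; $\mathrm{dist}(x_i,X_i)$ is the distance from $x_i$ to $X_i$. $f_i(x)=\frac12a_ix_i^2+b_ix_i+\big(\sum_{j\ne i}c_{ij}x_j\big)x_i+\frac1{2\eta}\mathrm{dist}^2(x_i,X_i)$. $\underline C\in\mathbb{R}^{m\times m}$ has $\underline C_{ii}=\frac12a_i$ and $\underline C_{ij}=c_{ij}$ for $i\ne j$. *)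

theory Defs
  imports "HOL-Analysis.Analysis"
begin

definition player_cost ::
  "('m::finite \<Rightarrow> real) \<Rightarrow> ('m \<Rightarrow> real) \<Rightarrow> ('m \<Rightarrow> 'm \<Rightarrow> real) \<Rightarrow> ('m \<Rightarrow> real) \<Rightarrow> real
   \<Rightarrow> 'm \<Rightarrow> real^'m \<Rightarrow> real" where
  "player_cost a b c cup \<eta> i x =
     1/2 * a i * (x$i)^2 + b i * x$i + (\<Sum>j\<in>UNIV - {i}. c i j * x$j) * x$i
     + 1/(2*\<eta>) * (infdist (x$i) {0..cup i})^2"

definition Cmat :: "('m::finite \<Rightarrow> real) \<Rightarrow> ('m \<Rightarrow> 'm \<Rightarrow> real) \<Rightarrow> real^'m^'m" where
  "Cmat a c = (\<chi> i j. if i = j then a i / 2 else c i j)"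

definition pos_semidef :: "real^'n^'n \<Rightarrow> bool" where
  "pos_semidef A \<longleftrightarrow> (\<forall>v. 0 \<le> v \<bullet> (A *v v))"

end

theory Submission
  imports Defs
begin

lemma infdist_interval:
  fixes t c :: real assumes "c \<ge> 0"
  shows "infdist t {0..c} = max 0 (max (-t) (t - c))"
proof (cases "t < 0")
  case True
  have "infdist t {0..c} \<le> -t" using infdist_le[of 0 "{0..c}" t] assms True
    by (simp add: dist_real_def)
  moreover have "-t \<le> infdist t {0..c}"
    using assms True by (subst infdist_notempty) (auto intro!: cINF_greatest simp: dist_real_def)
  ultimately show ?thesis using True assms by auto
next
  case False
  show ?thesis
  proof (cases "t > c")
    case True
    have "infdist t {0..c} \<le> t - c" using infdist_le[of c "{0..c}" t] assms True
      by (simp add: dist_real_def)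
    moreover have "t - c \<le> infdist t {0..c}"
      using assms True by (subst infdist_notempty) (auto intro!: cINF_greatest simp: dist_real_def)
    ultimately show ?thesis using True assms by auto
  next
    case False2: False
    then show ?thesis using False by simp
  qed
qed

lemma sq_conv:
  fixes t x y c :: real assumes "c \<ge> 0" "0 \<le> t" "t \<le> 1"
  shows "(infdist ((1-t)*x + t*y) {0..c})^2 \<le> (1-t) * (infdist x {0..c})^2 + t * (infdist y {0..c})^2"
proof -
  define h where "h = (\<lambda>s::real. max 0 (max (-s) (s - c)))"
  have h0: "\<And>s. 0 \<le> h s" unfolding h_def by auto
  have hc: "h ((1-t)*x + t*y) \<le> (1-t) * h x + t * h y"
  proof -
    have a: "(1-t) * h x \<ge> (1-t) * 0" "(1-t) * h x \<ge> (1-t) * (-x)" "(1-t) * h x \<ge> (1-t) * (x-c)"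
      using assms unfolding h_def by (intro mult_left_mono; auto)+
    have b: "t * h y \<ge> t * 0" "t * h y \<ge> t * (-y)" "t * h y \<ge> t * (y-c)"
      using assms unfolding h_def by (intro mult_left_mono; auto)+
    have e: "h ((1-t)*x + t*y) = max 0 (max (- ((1-t)*x + t*y)) ((1-t)*x + t*y - c))" by (simp add: h_def)
    show ?thesis unfolding e
    proof (intro max.boundedI)
      show "0 \<le> (1-t) * h x + t * h y" using a(1) b(1) by linarith
      show "- ((1-t)*x + t*y) \<le> (1-t) * h x + t * h y" using a(2) b(2) by (simp add: algebra_simps)
      show "(1-t)*x + t*y - c \<le> (1-t) * h x + t * h y" using a(3) b(3) by (simp add: algebra_simps)
    qed
  qed
  have "(h ((1-t)*x + t*y))^2 \<le> ((1-t) * h x + t * h y)^2"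
    using hc h0 by (intro power_mono) auto
  also have "\<dots> \<le> (1-t) * (h x)^2 + t * (h y)^2"
  proof -
    have "(1-t) * (h x)^2 + t * (h y)^2 - ((1-t) * h x + t * h y)^2 = t*(1-t)*(h x - h y)^2"
      by (simp add: power2_eq_square algebra_simps)
    moreover have "0 \<le> t*(1-t)*(h x - h y)^2" using assms by simp
    ultimately show ?thesis by linarith
  qed
  finally show ?thesis using infdist_interval[OF assms(1)] unfolding h_def by simp
qed

definition Qf :: "real^'m^'m \<Rightarrow> real^'m \<Rightarrow> real" where
  "Qf M x = (\<Sum>i\<in>UNIV. \<Sum>j\<in>UNIV. M$i$j * x$i * x$j)"

lemma Qf_identity:
  fixes M :: "real^'m::finite^'m"
  shows "Qf M ((1-t) *\<^sub>R x + t *\<^sub>R y) = (1-t) * Qf M x + t * Qf M y - t*(1-t) * Qf M (x - y)"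
proof -
  have "(1-t) * Qf M x + t * Qf M y - t*(1-t) * Qf M (x - y) - Qf M ((1-t) *\<^sub>R x + t *\<^sub>R y)
     = (\<Sum>i\<in>UNIV. \<Sum>j\<in>UNIV. M$i$j * ((1-t) * x$i * x$j + t * y$i * y$j - t*(1-t)*(x$i-y$i)*(x$j-y$j)
         - ((1-t)*x$i + t*y$i)*((1-t)*x$j+t*y$j)))"
    unfolding Qf_def
    by (simp add: sum_distrib_left sum_subtractf[symmetric] sum.distrib[symmetric] algebra_simps)
  also have "\<dots> = 0"
    by (intro sum.neutral ballI) (simp add: algebra_simps power2_eq_square)
  finally show ?thesis by simp
qed

lemma Qf_convex:
  fixes M :: "real^'m::finite^'m"
  assumes "\<And>z. 0 \<le> Qf M z"
  shows "convex_on UNIV (Qf M)"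
proof (rule convex_onI)
  fix t :: real and x y :: "real^'m" assume "0 < t" "t < 1"
  then have "0 \<le> t*(1-t) * Qf M (x - y)" using assms by simp
  then show "Qf M ((1 - t) *\<^sub>R x + t *\<^sub>R y) \<le> (1 - t) * Qf M x + t * Qf M y"
    unfolding Qf_identity by linarith
qed simp

theorem lemma10:
  fixes a b cup :: "'m::finite \<Rightarrow> real" and c :: "'m \<Rightarrow> 'm \<Rightarrow> real" and \<eta> :: real
  assumes "\<forall>i. a i \<ge> 0" and "\<forall>i. cup i > 0" and "\<eta> > 0"
    and "pos_semidef ((1/2) *\<^sub>R (Cmat a c + transpose (Cmat a c)))"
  shows "convex_on UNIV (\<lambda>x. \<Sum>i\<in>UNIV. player_cost a b c cup \<eta> i x)"
proof -
  define M where "M = Cmat a c"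
  have psd: "0 \<le> Qf M z" for z
  proof -
    have s: "Qf M z = (\<Sum>i\<in>UNIV. \<Sum>j\<in>UNIV. M$j$i * z$i * z$j)"
      unfolding Qf_def by (subst sum.swap) (simp add: mult_ac)
    have "z \<bullet> (((1/2) *\<^sub>R (M + transpose M)) *v z) = (1/2) * (Qf M z + (\<Sum>i\<in>UNIV. \<Sum>j\<in>UNIV. M$j$i * z$i * z$j))"
      unfolding Qf_def inner_vec_def matrix_vector_mult_def transpose_def
      by (simp add: sum_distrib_left sum.distrib algebra_simps)
    then have "z \<bullet> (((1/2) *\<^sub>R (M + transpose M)) *v z) = Qf M z" using s by simp
    then show ?thesis using assms(4) unfolding pos_semidef_def M_def by metis
  qed
  define L where "L = (\<lambda>x::real^'m. \<Sum>i\<in>UNIV. b i * x$i)"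
  define D where "D = (\<lambda>x::real^'m. \<Sum>i\<in>UNIV. 1/(2*\<eta>) * (infdist (x$i) {0..cup i})^2)"
  have row: "(\<Sum>j\<in>UNIV. M$i$j * x$i * x$j) = 1/2 * a i * (x$i)^2 + (\<Sum>j\<in>UNIV - {i}. c i j * x$j) * x$i"
    for i and x :: "real^'m"
  proof -
    have "(\<Sum>j\<in>UNIV. M$i$j * x$i * x$j) = M$i$i * x$i * x$i + (\<Sum>j\<in>UNIV - {i}. M$i$j * x$i * x$j)"
      by (subst sum.remove[of UNIV i]) auto
    also have "(\<Sum>j\<in>UNIV - {i}. M$i$j * x$i * x$j) = (\<Sum>j\<in>UNIV - {i}. c i j * x$j) * x$i"
      unfolding sum_distrib_right by (intro sum.cong) (auto simp: M_def Cmat_def)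
    finally show ?thesis by (simp add: M_def Cmat_def power2_eq_square)
  qed
  have eq: "(\<lambda>x. \<Sum>i\<in>UNIV. player_cost a b c cup \<eta> i x) = (\<lambda>x. Qf M x + L x + D x)"
    by (rule ext) (simp add: player_cost_def Qf_def L_def D_def row sum.distrib)
  have cL: "convex_on UNIV L"
  proof (rule convex_onI)
    fix t :: real and x y :: "real^'m"
    have "(1-t)*L x + t*L y = (\<Sum>i\<in>UNIV. (1-t)*(b i*x$i) + t*(b i*y$i))"
      by (simp add: L_def sum_distrib_left sum.distrib)
    also have "\<dots> = (\<Sum>i\<in>UNIV. b i * ((1-t)*x$i+t*y$i))"
      by (rule sum.cong) (auto simp: algebra_simps)
    also have "\<dots> = L ((1 - t) *\<^sub>R x + t *\<^sub>R y)" by (simp add: L_def)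
    finally show "L ((1 - t) *\<^sub>R x + t *\<^sub>R y) \<le> (1 - t) * L x + t * L y" by simp
  qed simp
  have cD: "convex_on UNIV D"
  proof (rule convex_onI)
    fix t :: real and x y :: "real^'m" assume t: "0 < t" "t < 1"
    have "D ((1 - t) *\<^sub>R x + t *\<^sub>R y) \<le> (\<Sum>i\<in>UNIV. 1/(2*\<eta>) * ((1-t) * (infdist (x$i) {0..cup i})^2 + t * (infdist (y$i) {0..cup i})^2))"
      unfolding D_def
    proof (rule sum_mono)
      fix i
      show "1/(2*\<eta>) * (infdist (((1 - t) *\<^sub>R x + t *\<^sub>R y)$i) {0..cup i})^2 \<le> 1/(2*\<eta>) * ((1-t) * (infdist (x$i) {0..cup i})^2 + t * (infdist (y$i) {0..cup i})^2)"
        using sq_conv[of "cup i" t "x$i" "y$i"] assms(2,3) t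
        by (intro mult_left_mono) (auto simp: less_imp_le)
    qed
    also have "\<dots> = (\<Sum>i\<in>UNIV. (1-t) * (1/(2*\<eta>) * (infdist (x$i) {0..cup i})^2) + t * (1/(2*\<eta>) * (infdist (y$i) {0..cup i})^2))"
      using assms(3) by (intro sum.cong) (auto simp: field_simps)
    also have "\<dots> = (1 - t) * D x + t * D y"
      by (simp add: D_def sum_distrib_left sum.distrib)
    finally show "D ((1 - t) *\<^sub>R x + t *\<^sub>R y) \<le> (1 - t) * D x + t * D y" .
  qed simp
  show ?thesis unfolding eq
    by (intro convex_on_add Qf_convex psd cL cD)
qed

end
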